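(* Consider the inner-loop system $x_2(k+1)=A_2x_2(k)+B_2u(k)$ with $x_2\in\mathbb{R}^{n_2}$, together with an inner-loop predictive controller operating as follows. At each time $k$ the inner loop receives a predicted reference-model trajectory $\mathbf{x_f}(k)=[\mathbf{x_f}(k|k),\dots,\mathbf{x_f}(k+N|k)]$ and chooses an input trajectory $\mathbf{u}(k)=[\mathbf{u}(k|k),\dots,\mathbf{u}(k+N-1|k)]$; the predicted states are $\mathbf{x_2}(k|k)=x_2(k)$, $\mathbf{x_2}(k+i+1|k)=A_2\mathbf{x_2}(k+i|k)+B_2\mathbf{u}(k+i|k)$, and $\mathbf{\tilde x}(k+i|k)=\mathbf{x_2}(k+i|k)-\mathbf{x_f}(k+i|k)$; the input applied at time $k$ is $u(k)=\mathbf{u}(k|k)$. Let $G_2=\{\tilde x\in\mathbb{R}^{n_2}:\tilde x^TP\tilde x\le V_2^*\}$ with $P$ symmetric positive definite and $V_2^*>0$, and let $\lambda_2\in[0,1)$. Suppose that, given $\mathbf{x_f}(k)$, a trajectory $\mathbf{u}(k)$ is computed that yields $\mathbf{\tilde x}(k+N|k)\in\lambda_2G_2$. Then there exists $\epsilon_{x_f}^{max}>0$ such that if $\|\mathbf{x_f}(k+N|k+1)-\mathbf{x_f}(k+N|k)\|\le\epsilon_{x_f}^{max}$ and $\mathbf{u}(k+i|k+1)=\mathbf{u}(k+i|k)$ for $i=1,\dots,N-1$, then $\mathbf{\tilde x}(k+N|k+1)\in G_2$.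
   Context: $\lambda_2G_2=\{\lambda_2x:x\in G_2\}$. The notation $(i|k)$ denotes the value of a variable at step $i$ predicted/chosen by the optimization carried out at time $k$; $N\ge 2$ is the prediction horizon. *)

theory Defs
  imports "HOL-Analysis.Analysis"
begin

text \<open>Predicted state trajectory of the inner loop:
  pred_traj A B x0 u i = x2(k+i|k) when x0 = x2(k) and u j = u(k+j|k).\<close>
fun pred_traj :: "real^'n^'n \<Rightarrow> real^'m^'n \<Rightarrow> real^'n \<Rightarrow> (nat \<Rightarrow> real^'m) \<Rightarrow> nat \<Rightarrow> real^'n" where
  "pred_traj A B x0 u 0 = x0"
| "pred_traj A B x0 u (Suc i) = A *v pred_traj A B x0 u i + B *v u i"

definition sym_pos_def :: "real^'n^'n \<Rightarrow> bool" where
  "sym_pos_def P \<longleftrightarrow> transpose P = P \<and> (\<forall>x. x \<noteq> 0 \<longrightarrow> x \<bullet> (P *v x) > 0)"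

definition G2_set :: "real^'n^'n \<Rightarrow> real \<Rightarrow> (real^'n) set" where
  "G2_set P V = {x. x \<bullet> (P *v x) \<le> V}"

end

theory Submission
  imports Defs
begin

lemma shift_traj:
  "(\<forall>j<i. u' j = u (Suc j)) \<Longrightarrow>
   pred_traj A B (A *v x0 + B *v u 0) u' i = pred_traj A B x0 u (Suc i)"
  by (induction i) auto

lemma cont_q: "continuous (at 0) (\<lambda>d::real^'n. (z - d) \<bullet> (P *v (z - d)))"
proof -
  have "continuous (at x) ((*v) P)" for x
    by (intro linear_continuous_at matrix_vector_mul_bounded_linear)
  then show ?thesis
    by (intro continuous_intros continuous_at_compose[of 0 "\<lambda>d. z - d" "(*v) P", unfolded o_def])
qed

theorem proposition6:
  fixes A2 :: "real^'n^'n" and B2 :: "real^'m^'n" and P :: "real^'n^'n"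
    and V2 :: real and lam2 :: real and N :: nat
    and x2k x2k1 :: "real^'n" and uk :: "nat \<Rightarrow> real^'m" and xfk :: "nat \<Rightarrow> real^'n"
  assumes "N \<ge> 2"
    and "sym_pos_def P" and "V2 > 0"
    and "0 \<le> lam2" and "lam2 < 1"
    and "x2k1 = A2 *v x2k + B2 *v uk 0"
    and "pred_traj A2 B2 x2k uk N - xfk N \<in> (\<lambda>x. lam2 *\<^sub>R x) ` G2_set P V2"
  shows "\<exists>eps > 0. \<forall>(xfk1 :: nat \<Rightarrow> real^'n) (uk1 :: nat \<Rightarrow> real^'m).
           norm (xfk1 (N - 1) - xfk N) \<le> eps \<and> (\<forall>i\<in>{1..N-1}. uk1 (i - 1) = uk i)
           \<longrightarrow> pred_traj A2 B2 x2k1 uk1 (N - 1) - xfk1 (N - 1) \<in> G2_set P V2"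
proof -
  define z where "z = pred_traj A2 B2 x2k uk N - xfk N"
  obtain y where y: "y \<bullet> (P *v y) \<le> V2" "z = lam2 *\<^sub>R y"
    using assms(7) unfolding z_def G2_set_def by auto
  have "z \<bullet> (P *v z) = lam2^2 * (y \<bullet> (P *v y))"
    using y by (simp add: matrix_vector_mult_scaleR power2_eq_square)
  also have "\<dots> \<le> lam2^2 * V2" using y assms by (intro mult_left_mono) auto
  also have "\<dots> < V2"
  proof -
    have "lam2^2 < 1" using assms(4,5) power_strict_mono[of lam2 1 2] by simp
    thus ?thesis using assms by simp
  qed
  finally have z0: "z \<bullet> (P *v z) < V2" .
  define f where "f = (\<lambda>d::real^'n. (z - d) \<bullet> (P *v (z - d)))"
  have "continuous (at 0) f" unfolding f_def by (rule cont_q)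
  then obtain dl where dl: "dl > 0" "\<And>d. norm d < dl \<Longrightarrow> dist (f d) (f 0) < V2 - z \<bullet> (P *v z)"
  proof -
    have "V2 - z \<bullet> (P *v z) > 0" using z0 by simp
    with \<open>continuous (at 0) f\<close> obtain dl where "dl > 0" "\<forall>x'. dist x' 0 < dl \<longrightarrow> dist (f x') (f 0) < V2 - z \<bullet> (P *v z)"
      unfolding continuous_at_eps_delta by blast
    then show ?thesis using that by (simp add: dist_norm)
  qed
  show ?thesis
  proof (intro exI[of _ "dl/2"] conjI allI impI)
    show "dl/2 > 0" using dl by simp
    fix xfk1 :: "nat \<Rightarrow> real^'n" and uk1 :: "nat \<Rightarrow> real^'m"
    assume h: "norm (xfk1 (N - 1) - xfk N) \<le> dl/2 \<and> (\<forall>i\<in>{1..N-1}. uk1 (i - 1) = uk i)"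
    have "\<forall>j<N-1. uk1 j = uk (Suc j)"
    proof (intro allI impI)
      fix j assume "j < N - 1"
      hence "Suc j \<in> {1..N-1}" by auto
      thus "uk1 j = uk (Suc j)" using h by (metis diff_Suc_1)
    qed
    hence "pred_traj A2 B2 x2k1 uk1 (N - 1) = pred_traj A2 B2 x2k uk N"
      using shift_traj[of "N-1" uk1 uk A2 B2 x2k] assms(1,6) by (simp add: Suc_diff_1)
    hence eq: "pred_traj A2 B2 x2k1 uk1 (N - 1) - xfk1 (N - 1) = z - (xfk1 (N - 1) - xfk N)"
      unfolding z_def by simp
    have "dist (f (xfk1 (N - 1) - xfk N)) (f 0) < V2 - z \<bullet> (P *v z)"
      using dl h by simp
    hence "f (xfk1 (N - 1) - xfk N) \<le> V2" unfolding f_def dist_real_def by auto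
    thus "pred_traj A2 B2 x2k1 uk1 (N - 1) - xfk1 (N - 1) \<in> G2_set P V2"
      unfolding eq G2_set_def f_def by simp
  qed
qed

end
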